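(* Both pairs $(T_n,T_L)$ and $(T_L',T_n')$ satisfy the rearrangement inequality and the dual rearrangement inequality.
   Context: Here $T_n(x,y)=\min(x,y)$ if $x+y>1$ and $0$ otherwise (nilpotent minimum); $T_L(x,y)=\max(x+y-1,0)$ (Łukasiewicz $T$-norm); $T_L'(x,y)=\min(x+y,1)$ (bounded sum); $T_n'(x,y)=\max(x,y)$ if $x+y<1$ and $1$ otherwise (nilpotent maximum); all are functions $[0,1]^2\to[0,1]$ and are commutative, associative, monotone uninorms. For such a pair $(\otimes,\oplus)$ (first component $\otimes$, second $\oplus$), it satisfies the rearrangement inequality if for every $n\geq1$, all $0\leq x_1\leq\cdots\leq x_n\leq 1$, $0\leq y_1\leq\cdots\leq y_n\leq 1$ and every permutation $\sigma$ of $\{1,\dots,n\}$, $$(x_n\otimes y_1)\oplus\cdots\oplus(x_1\otimes y_n)\leq (x_{\sigma(1)}\otimes y_1)\oplus\cdots\oplus(x_{\sigma(n)}\otimes y_n)\leq (x_1\otimes y_1)\oplus\cdots\oplus(x_n\otimes y_n),$$ and the dual rearrangement inequality if for all such data $$(x_n\oplus y_1)\otimes\cdots\otimes(x_1\oplus y_n)\geq (x_{\sigma(1)}\oplus y_1)\otimes\cdots\otimes(x_{\sigma(n)}\oplus y_n)\geq (x_1\oplus y_1)\otimes\cdots\otimes(x_n\oplus y_n).$$ *)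

theory Defs
  imports Complex_Main "HOL-Combinatorics.Permutations"
begin

definition T_n :: "real \<Rightarrow> real \<Rightarrow> real" where
  "T_n x y = (if x + y > 1 then min x y else 0)"

definition T_L :: "real \<Rightarrow> real \<Rightarrow> real" where
  "T_L x y = max (x + y - 1) 0"

definition T_L' :: "real \<Rightarrow> real \<Rightarrow> real" where
  "T_L' x y = min (x + y) 1"

definition T_n' :: "real \<Rightarrow> real \<Rightarrow> real" where
  "T_n' x y = (if x + y < 1 then max x y else 1)"

text \<open>Iterated operation: iter op a k = a 0 op a 1 op ... op a k (left-nested),
  so an n-fold expression (n \<ge> 1) is iter op a (n - 1).\<close>
fun iter :: "(real \<Rightarrow> real \<Rightarrow> real) \<Rightarrow> (nat \<Rightarrow> real) \<Rightarrow> nat \<Rightarrow> real" where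
  "iter op a 0 = a 0"
| "iter op a (Suc k) = op (iter op a k) (a (Suc k))"

definition sorted01 :: "nat \<Rightarrow> (nat \<Rightarrow> real) \<Rightarrow> bool" where
  "sorted01 n x \<longleftrightarrow> (\<forall>i<n. 0 \<le> x i \<and> x i \<le> 1) \<and> (\<forall>i j. i \<le> j \<longrightarrow> j < n \<longrightarrow> x i \<le> x j)"

definition rearrangement_ineq :: "(real \<Rightarrow> real \<Rightarrow> real) \<Rightarrow> (real \<Rightarrow> real \<Rightarrow> real) \<Rightarrow> bool" where
  "rearrangement_ineq otimes oplus \<longleftrightarrow>
    (\<forall>n x y \<sigma>. n \<ge> 1 \<longrightarrow> sorted01 n x \<longrightarrow> sorted01 n y \<longrightarrow> \<sigma> permutes {..<n} \<longrightarrow>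
       iter oplus (\<lambda>i. otimes (x (n - 1 - i)) (y i)) (n - 1)
         \<le> iter oplus (\<lambda>i. otimes (x (\<sigma> i)) (y i)) (n - 1)
     \<and> iter oplus (\<lambda>i. otimes (x (\<sigma> i)) (y i)) (n - 1)
         \<le> iter oplus (\<lambda>i. otimes (x i) (y i)) (n - 1))"

definition dual_rearrangement_ineq :: "(real \<Rightarrow> real \<Rightarrow> real) \<Rightarrow> (real \<Rightarrow> real \<Rightarrow> real) \<Rightarrow> bool" where
  "dual_rearrangement_ineq otimes oplus \<longleftrightarrow>
    (\<forall>n x y \<sigma>. n \<ge> 1 \<longrightarrow> sorted01 n x \<longrightarrow> sorted01 n y \<longrightarrow> \<sigma> permutes {..<n} \<longrightarrow>
       iter otimes (\<lambda>i. oplus (x (n - 1 - i)) (y i)) (n - 1)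
         \<ge> iter otimes (\<lambda>i. oplus (x (\<sigma> i)) (y i)) (n - 1)
     \<and> iter otimes (\<lambda>i. oplus (x (\<sigma> i)) (y i)) (n - 1)
         \<ge> iter otimes (\<lambda>i. oplus (x i) (y i)) (n - 1))"

end

theory Submission
  imports Defs
begin

definition cl :: "real \<Rightarrow> real" where "cl u = max 0 (min 1 u)"
definition clop :: "(real \<Rightarrow> real \<Rightarrow> real) \<Rightarrow> real \<Rightarrow> real \<Rightarrow> real" where
  "clop op u v = op (cl u) (cl v)"

definition good :: "(real \<Rightarrow> real \<Rightarrow> real) \<Rightarrow> real \<Rightarrow> bool" where
  "good op e \<longleftrightarrow> 0 \<le> e \<and> e \<le> 1 \<and>
    (\<forall>x y. 0 \<le> x \<longrightarrow> x \<le> 1 \<longrightarrow> 0 \<le> y \<longrightarrow> y \<le> 1 \<longrightarrow> op x y = op y x \<and> 0 \<le> op x y \<and> op x y \<le> 1) \<and>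
    (\<forall>x y z. 0 \<le> x \<longrightarrow> x \<le> 1 \<longrightarrow> 0 \<le> y \<longrightarrow> y \<le> 1 \<longrightarrow> 0 \<le> z \<longrightarrow> z \<le> 1 \<longrightarrow> op (op x y) z = op x (op y z)) \<and>
    (\<forall>x x' y. 0 \<le> x \<longrightarrow> x \<le> x' \<longrightarrow> x' \<le> 1 \<longrightarrow> 0 \<le> y \<longrightarrow> y \<le> 1 \<longrightarrow> op x y \<le> op x' y) \<and>
    (\<forall>x. 0 \<le> x \<longrightarrow> x \<le> 1 \<longrightarrow> op x e = x)"

lemma cl_id: "0 \<le> u \<Longrightarrow> u \<le> 1 \<Longrightarrow> cl u = u" by (simp add: cl_def)
lemma cl_rng: "0 \<le> cl u" "cl u \<le> 1" by (auto simp: cl_def)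
lemma cl_mono: "u \<le> u' \<Longrightarrow> cl u \<le> cl u'" by (auto simp: cl_def)

lemma good_e: "good op e \<Longrightarrow> 0 \<le> e \<and> e \<le> 1" unfolding good_def by blast
lemma good_comm: "good op e \<Longrightarrow> 0 \<le> x \<Longrightarrow> x \<le> 1 \<Longrightarrow> 0 \<le> y \<Longrightarrow> y \<le> 1 \<Longrightarrow> op x y = op y x"
  unfolding good_def by blast
lemma good_rng: "good op e \<Longrightarrow> 0 \<le> x \<Longrightarrow> x \<le> 1 \<Longrightarrow> 0 \<le> y \<Longrightarrow> y \<le> 1 \<Longrightarrow> 0 \<le> op x y \<and> op x y \<le> 1"
  unfolding good_def by blast
lemma good_assoc: "good op e \<Longrightarrow> 0 \<le> x \<Longrightarrow> x \<le> 1 \<Longrightarrow> 0 \<le> y \<Longrightarrow> y \<le> 1 \<Longrightarrow> 0 \<le> z \<Longrightarrow> z \<le> 1 \<Longrightarrow> op (op x y) z = op x (op y z)"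
  unfolding good_def by blast
lemma good_mono: "good op e \<Longrightarrow> 0 \<le> x \<Longrightarrow> x \<le> x' \<Longrightarrow> x' \<le> 1 \<Longrightarrow> 0 \<le> y \<Longrightarrow> y \<le> 1 \<Longrightarrow> op x y \<le> op x' y"
  unfolding good_def by blast
lemma good_unit: "good op e \<Longrightarrow> 0 \<le> x \<Longrightarrow> x \<le> 1 \<Longrightarrow> op x e = x"
  unfolding good_def by blast

lemma clop_rng: "good op e \<Longrightarrow> 0 \<le> clop op u v \<and> clop op u v \<le> 1"
  unfolding clop_def using cl_rng good_rng by blast

lemma clop_comm: "good op e \<Longrightarrow> clop op u v = clop op v u"
  unfolding clop_def using cl_rng good_comm by blast

lemma clop_assoc: "good op e \<Longrightarrow> clop op (clop op u v) w = clop op u (clop op v w)"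
proof -
  assume g: "good op e"
  have 1: "cl (clop op u v) = clop op u v" "cl (clop op v w) = clop op v w"
    using clop_rng[OF g] cl_id by auto
  have "clop op (clop op u v) w = op (op (cl u) (cl v)) (cl w)"
    by (simp add: clop_def[of op "clop op u v"] 1) (simp add: clop_def)
  also have "\<dots> = op (cl u) (op (cl v) (cl w))"
    using good_assoc[OF g] cl_rng by blast
  also have "\<dots> = clop op u (clop op v w)"
    by (simp add: clop_def[of op u "clop op v w"] 1) (simp add: clop_def)
  finally show ?thesis .
qed

lemma clop_mono: "good op e \<Longrightarrow> u \<le> u' \<Longrightarrow> clop op u v \<le> clop op u' v"
  unfolding clop_def using cl_rng cl_mono good_mono by meson

lemma clop_cfc: "good op e \<Longrightarrow> comp_fun_commute (clop op)"
  unfolding comp_fun_commute_def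
proof (intro allI ext)
  fix x y r assume g: "good op e"
  have "(clop op y \<circ> clop op x) r = clop op (clop op y x) r" by (simp add: clop_assoc[OF g])
  also have "\<dots> = clop op (clop op x y) r" using clop_comm[OF g] by metis
  also have "\<dots> = (clop op x \<circ> clop op y) r" by (simp add: clop_assoc[OF g])
  finally show "(clop op y \<circ> clop op x) r = (clop op x \<circ> clop op y) r" .
qed

definition Agg :: "(real \<Rightarrow> real \<Rightarrow> real) \<Rightarrow> real \<Rightarrow> (nat \<Rightarrow> real) \<Rightarrow> nat set \<Rightarrow> real" where
  "Agg F e h A = fold_mset F e (image_mset h (mset_set A))"

lemma iter_Agg:
  assumes g: "good op e" and a: "\<forall>i\<le>k. 0 \<le> a i \<and> a i \<le> 1"
  shows "iter op a k = Agg (clop op) e a {..k} \<and> 0 \<le> iter op a k \<and> iter op a k \<le> 1"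
  using a
proof (induction k)
  case 0
  interpret comp_fun_commute "clop op" by (rule clop_cfc[OF g])
  have "clop op (a 0) e = a 0" using g 0 cl_id good_unit good_e unfolding clop_def by auto
  then show ?case using 0 by (simp add: Agg_def)
next
  case (Suc k)
  interpret comp_fun_commute "clop op" by (rule clop_cfc[OF g])
  have IH: "iter op a k = Agg (clop op) e a {..k}" "0 \<le> iter op a k" "iter op a k \<le> 1"
    using Suc by auto
  have ak: "0 \<le> a (Suc k)" "a (Suc k) \<le> 1" using Suc.prems by auto
  have ms: "mset_set {..Suc k} = add_mset (Suc k) (mset_set {..k})"
    by (simp add: atMost_Suc)
  have "Agg (clop op) e a {..Suc k} = clop op (a (Suc k)) (iter op a k)"
    by (simp add: Agg_def ms IH(1))
  also have "\<dots> = op (iter op a k) (a (Suc k))"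
    using good_comm[OF g] IH ak cl_id unfolding clop_def by auto
  finally show ?case using good_rng[OF g] IH ak by auto
qed


lemma mset_set_two:
  assumes "finite A" "a \<in> A" "b \<in> A" "a \<noteq> b"
  shows "mset_set A = add_mset a (add_mset b (mset_set (A - {a, b})))"
proof -
  have "A = insert a (insert b (A - {a, b}))" using assms by auto
  then have "mset_set A = mset_set (insert a (insert b (A - {a, b})))" by simp
  also have "\<dots> = add_mset a (add_mset b (mset_set (A - {a, b})))"
    using assms by simp
  finally show ?thesis .
qed

lemma core:
  fixes F :: "real \<Rightarrow> real \<Rightarrow> real" and R :: "real \<Rightarrow> real \<Rightarrow> bool"
  assumes cf: "comp_fun_commute F"
    and assoc: "\<And>u v w. F (F u v) w = F u (F v w)"
    and Rrefl: "\<And>a. R a a"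
    and Rtrans: "\<And>a b c. R a b \<Longrightarrow> R b c \<Longrightarrow> R a c"
    and Rmono: "\<And>u u' v. R u u' \<Longrightarrow> R (F u v) (F u' v)"
    and sw: "\<And>i i' k k'. i < i' \<Longrightarrow> k < k' \<Longrightarrow> i' < n \<Longrightarrow> k' < n \<Longrightarrow>
               R (F (g i' k) (g i k')) (F (g i k) (g i' k'))"
  shows "bij_betw \<sigma> {..<n} {..<n} \<Longrightarrow> R (Agg F e (\<lambda>k. g (\<sigma> k) k) {..<n}) (Agg F e (\<lambda>k. g k k) {..<n})"
proof (induction "card {k. k < n \<and> \<sigma> k \<noteq> k}" arbitrary: \<sigma> rule: less_induct)
  case less
  interpret comp_fun_commute F by (rule cf)
  define S where "S = {k. k < n \<and> \<sigma> k \<noteq> k}"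
  have finS: "finite S" unfolding S_def by auto
  show ?case
  proof (cases "S = {}")
    case True
    then have "\<And>k. k \<in> {..<n} \<Longrightarrow> g (\<sigma> k) k = g k k" unfolding S_def by auto
    then have "image_mset (\<lambda>k. g (\<sigma> k) k) (mset_set {..<n}) = image_mset (\<lambda>k. g k k) (mset_set {..<n})"
      by (intro image_mset_cong) auto
    then show ?thesis using Rrefl by (simp add: Agg_def)
  next
    case False
    define m where "m = Max S"
    have mS: "m \<in> S" unfolding m_def using Max_in[OF finS False] .
    have mmax: "\<And>k. k \<in> S \<Longrightarrow> k \<le> m" unfolding m_def using Max_ge[OF finS] .
    have mn: "m < n" "\<sigma> m \<noteq> m" using mS unfolding S_def by auto
    have bij: "bij_betw \<sigma> {..<n} {..<n}" by (rule less.prems)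
    have inj: "inj_on \<sigma> {..<n}" using bij by (rule bij_betw_imp_inj_on)
    have img: "\<sigma> ` {..<n} = {..<n}" using bij by (rule bij_betw_imp_surj_on)
    have fix_above: "\<And>k. m < k \<Longrightarrow> k < n \<Longrightarrow> \<sigma> k = k"
      using mmax unfolding S_def by force
    have smn: "\<sigma> m < n" using img mn by auto
    have sm: "\<sigma> m < m"
    proof (rule ccontr)
      assume "\<not> \<sigma> m < m"
      then have "m < \<sigma> m" using mn by simp
      then have "\<sigma> (\<sigma> m) = \<sigma> m" using fix_above smn by simp
      then have "\<sigma> m = m" using inj smn mn inj_onD by fastforce
      then show False using mn by simp
    qed
    obtain j where j: "j < n" "\<sigma> j = m" using img mn by (metis imageE lessThan_iff)
    have jm: "j < m"
    proof (rule ccontr)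
      assume "\<not> j < m"
      moreover have "j \<noteq> m" using j mn by auto
      ultimately have "m < j" by simp
      then have "j \<in> S" using j unfolding S_def by auto
      then show False using mmax \<open>m < j\<close> by fastforce
    qed
    define \<tau> where "\<tau> = \<sigma> \<circ> Transposition.transpose j m"
    have tj: "\<tau> j = \<sigma> m" and tm: "\<tau> m = m" using j unfolding \<tau>_def by auto
    have toth: "\<And>k. k \<noteq> j \<Longrightarrow> k \<noteq> m \<Longrightarrow> \<tau> k = \<sigma> k" unfolding \<tau>_def by auto
    have bt: "bij_betw \<tau> {..<n} {..<n}" unfolding \<tau>_def
      using bij j mn by (intro bij_betw_trans[of _ _ "{..<n}"]) auto
    have sub: "{k. k < n \<and> \<tau> k \<noteq> k} \<subseteq> S - {m}"
    proof
      fix k assume k: "k \<in> {k. k < n \<and> \<tau> k \<noteq> k}"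
      show "k \<in> S - {m}"
      proof (cases "k = j")
        case True then show ?thesis using j jm k mn unfolding S_def by auto
      next
        case False then show ?thesis using k tm toth unfolding S_def by (cases "k = m") auto
      qed
    qed
    have "card {k. k < n \<and> \<tau> k \<noteq> k} < card S"
    proof -
      have "card {k. k < n \<and> \<tau> k \<noteq> k} \<le> card (S - {m})" using sub finS by (intro card_mono) auto
      also have "\<dots> < card S" using card_Diff1_less[OF finS mS] .
      finally show ?thesis .
    qed
    then have IH: "R (Agg F e (\<lambda>k. g (\<tau> k) k) {..<n}) (Agg F e (\<lambda>k. g k k) {..<n})"
      using less.hyps bt unfolding S_def by blast
    define D where "D = {..<n} - {j, m}"
    have ms: "mset_set {..<n} = add_mset j (add_mset m (mset_set D))"
      unfolding D_def using j mn jm by (intro mset_set_two) auto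
    have Deq: "image_mset (\<lambda>k. g (\<tau> k) k) (mset_set D) = image_mset (\<lambda>k. g (\<sigma> k) k) (mset_set D)"
      using toth unfolding D_def by (intro image_mset_cong) auto
    define r where "r = fold_mset F e (image_mset (\<lambda>k. g (\<sigma> k) k) (mset_set D))"
    have A1: "Agg F e (\<lambda>k. g (\<sigma> k) k) {..<n} = F (F (g m j) (g (\<sigma> m) m)) r"
      unfolding Agg_def ms r_def using j by (simp add: assoc)
    have A2: "Agg F e (\<lambda>k. g (\<tau> k) k) {..<n} = F (F (g (\<sigma> m) j) (g m m)) r"
      unfolding Agg_def ms r_def using tj tm by (simp add: assoc Deq)
    have "R (F (g m j) (g (\<sigma> m) m)) (F (g (\<sigma> m) j) (g m m))"
      using sw[of "\<sigma> m" m j m] sm jm mn by simp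
    then have "R (Agg F e (\<lambda>k. g (\<sigma> k) k) {..<n}) (Agg F e (\<lambda>k. g (\<tau> k) k) {..<n})"
      unfolding A1 A2 by (rule Rmono)
    then show ?thesis using IH Rtrans by blast
  qed
qed


lemma rev_bij: "bij_betw (\<lambda>i. n - 1 - i) {..<n} {..<(n::nat)}"
  by (rule bij_betw_byWitness[where f'="\<lambda>i. n - 1 - i"]) auto

lemma generic:
  fixes op pr :: "real \<Rightarrow> real \<Rightarrow> real" and R :: "real \<Rightarrow> real \<Rightarrow> bool"
  assumes g: "good op e" and Rc: "R = (\<le>) \<or> R = (\<ge>)"
    and clos: "\<And>a b. 0 \<le> a \<Longrightarrow> a \<le> 1 \<Longrightarrow> 0 \<le> b \<Longrightarrow> b \<le> 1 \<Longrightarrow> 0 \<le> pr a b \<and> pr a b \<le> 1"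
    and P: "\<And>a a' b b'. 0 \<le> a \<Longrightarrow> a \<le> a' \<Longrightarrow> a' \<le> 1 \<Longrightarrow> 0 \<le> b \<Longrightarrow> b \<le> b' \<Longrightarrow> b' \<le> 1 \<Longrightarrow>
          R (op (pr a' b) (pr a b')) (op (pr a b) (pr a' b'))"
    and n: "n \<ge> 1" and sx: "sorted01 n x" and sy: "sorted01 n y" and sg: "\<sigma> permutes {..<n}"
  shows "R (iter op (\<lambda>i. pr (x (n - 1 - i)) (y i)) (n - 1)) (iter op (\<lambda>i. pr (x (\<sigma> i)) (y i)) (n - 1))
       \<and> R (iter op (\<lambda>i. pr (x (\<sigma> i)) (y i)) (n - 1)) (iter op (\<lambda>i. pr (x i) (y i)) (n - 1))"
proof -
  define F where "F = clop op"
  have cf: "comp_fun_commute F" unfolding F_def by (rule clop_cfc[OF g])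
  have assoc: "\<And>u v w. F (F u v) w = F u (F v w)" unfolding F_def by (rule clop_assoc[OF g])
  have Fop: "\<And>u v. 0 \<le> u \<Longrightarrow> u \<le> 1 \<Longrightarrow> 0 \<le> v \<Longrightarrow> v \<le> 1 \<Longrightarrow> F u v = op u v"
    unfolding F_def clop_def by (simp add: cl_id)
  have Rrefl: "\<And>a. R a a" using Rc by auto
  have Rtrans: "\<And>a b c. R a b \<Longrightarrow> R b c \<Longrightarrow> R a c" using Rc by auto
  have Rmono: "\<And>u u' v. R u u' \<Longrightarrow> R (F u v) (F u' v)"
    using Rc clop_mono[OF g] unfolding F_def by auto
  have R'refl: "\<And>a. R a a" using Rc by auto
  have R'trans: "\<And>a b c. R b a \<Longrightarrow> R c b \<Longrightarrow> R c a" using Rc by auto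
  have R'mono: "\<And>u u' v. R u' u \<Longrightarrow> R (F u' v) (F u v)"
    using Rc clop_mono[OF g] unfolding F_def by auto
  have xr: "\<And>i. i < n \<Longrightarrow> 0 \<le> x i \<and> x i \<le> 1" and xs: "\<And>i j. i \<le> j \<Longrightarrow> j < n \<Longrightarrow> x i \<le> x j"
    using sx unfolding sorted01_def by auto
  have yr: "\<And>i. i < n \<Longrightarrow> 0 \<le> y i \<and> y i \<le> 1" and ys: "\<And>i j. i \<le> j \<Longrightarrow> j < n \<Longrightarrow> y i \<le> y j"
    using sy unfolding sorted01_def by auto
  have pr01: "\<And>i k. i < n \<Longrightarrow> k < n \<Longrightarrow> 0 \<le> pr (x i) (y k) \<and> pr (x i) (y k) \<le> 1"
    using clos xr yr by blast
  have bs: "bij_betw \<sigma> {..<n} {..<n}" using sg by (rule permutes_imp_bij)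
  have sn: "\<And>i. i < n \<Longrightarrow> \<sigma> i < n" using permutes_in_image[OF sg] by simp
  have dom: "{..n - 1} = {..<n}" using n by auto
  have it: "\<And>h. (\<And>i. i < n \<Longrightarrow> 0 \<le> h i \<and> h i \<le> 1) \<Longrightarrow> iter op h (n - 1) = Agg F e h {..<n}"
  proof -
    fix h :: "nat \<Rightarrow> real" assume "\<And>i. i < n \<Longrightarrow> 0 \<le> h i \<and> h i \<le> 1"
    then have "\<forall>i\<le>n - 1. 0 \<le> h i \<and> h i \<le> 1" using n by auto
    then show "iter op h (n - 1) = Agg F e h {..<n}" using iter_Agg[OF g] dom unfolding F_def by metis
  qed
  have itS: "iter op (\<lambda>i. pr (x (\<sigma> i)) (y i)) (n - 1) = Agg F e (\<lambda>i. pr (x (\<sigma> i)) (y i)) {..<n}"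
    using pr01 sn by (intro it) auto
  have itI: "iter op (\<lambda>i. pr (x i) (y i)) (n - 1) = Agg F e (\<lambda>i. pr (x i) (y i)) {..<n}"
    using pr01 by (intro it) auto
  have itA: "iter op (\<lambda>i. pr (x (n - 1 - i)) (y i)) (n - 1) = Agg F e (\<lambda>i. pr (x (n - 1 - i)) (y i)) {..<n}"
    using pr01 by (intro it) auto
  have up: "R (Agg F e (\<lambda>k. pr (x (\<sigma> k)) (y k)) {..<n}) (Agg F e (\<lambda>k. pr (x k) (y k)) {..<n})"
  proof (rule core[where g="\<lambda>i k. pr (x i) (y k)" and F=F and R=R and n=n and e=e and \<sigma>=\<sigma>, OF cf assoc Rrefl Rtrans Rmono _ bs])
    fix i i' k k' :: nat assume a: "i < i'" "k < k'" "i' < n" "k' < n"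
    have "R (op (pr (x i') (y k)) (pr (x i) (y k'))) (op (pr (x i) (y k)) (pr (x i') (y k')))"
      using a xr yr xs ys by (intro P) auto
    then show "R (F (pr (x i') (y k)) (pr (x i) (y k'))) (F (pr (x i) (y k)) (pr (x i') (y k')))"
      using a pr01 Fop by (simp add: Fop pr01)
  qed
  define \<rho> where "\<rho> = (\<lambda>k. n - 1 - \<sigma> k)"
  have br: "bij_betw \<rho> {..<n} {..<n}" unfolding \<rho>_def
    using bij_betw_trans[OF bs rev_bij] by (simp add: comp_def)
  have lo: "(\<lambda>a b. R b a) (Agg F e (\<lambda>k. pr (x (n - 1 - \<rho> k)) (y k)) {..<n}) (Agg F e (\<lambda>k. pr (x (n - 1 - k)) (y k)) {..<n})"
  proof (rule core[where g="\<lambda>i k. pr (x (n - 1 - i)) (y k)" and R="\<lambda>a b. R b a" and F=F and n=n and e=e and \<sigma>=\<rho>, OF cf assoc R'refl R'trans R'mono _ br])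
    fix i i' k k' :: nat assume a: "i < i'" "k < k'" "i' < n" "k' < n"
    have "R (op (pr (x (n - 1 - i)) (y k)) (pr (x (n - 1 - i')) (y k'))) (op (pr (x (n - 1 - i')) (y k)) (pr (x (n - 1 - i)) (y k')))"
      using a xr yr xs ys by (intro P) auto
    then show "R (F (pr (x (n - 1 - i)) (y k)) (pr (x (n - 1 - i')) (y k'))) (F (pr (x (n - 1 - i')) (y k)) (pr (x (n - 1 - i)) (y k')))"
      using a by (simp add: Fop pr01)
  qed
  have "image_mset (\<lambda>k. pr (x (n - 1 - \<rho> k)) (y k)) (mset_set {..<n}) = image_mset (\<lambda>k. pr (x (\<sigma> k)) (y k)) (mset_set {..<n})"
  proof (intro image_mset_cong)
    fix k assume "k \<in># mset_set {..<n}"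
    then have "\<sigma> k < n" using sn by simp
    then have "n - 1 - \<rho> k = \<sigma> k" unfolding \<rho>_def by linarith
    then show "pr (x (n - 1 - \<rho> k)) (y k) = pr (x (\<sigma> k)) (y k)" by simp
  qed
  then have "Agg F e (\<lambda>k. pr (x (n - 1 - \<rho> k)) (y k)) {..<n} = Agg F e (\<lambda>k. pr (x (\<sigma> k)) (y k)) {..<n}"
    by (simp add: Agg_def)
  then show ?thesis using up lo itS itI itA by simp
qed


lemma P1: "0 \<le> a \<Longrightarrow> a \<le> a' \<Longrightarrow> a' \<le> 1 \<Longrightarrow> 0 \<le> b \<Longrightarrow> b \<le> b' \<Longrightarrow> b' \<le> (1::real) \<Longrightarrow>
  T_L (T_n a' b) (T_n a b') \<le> T_L (T_n a b) (T_n a' b')"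
  unfolding T_L_def T_n_def by (auto simp: min_def max_def split: if_splits)
lemma P2: "0 \<le> a \<Longrightarrow> a \<le> a' \<Longrightarrow> a' \<le> 1 \<Longrightarrow> 0 \<le> b \<Longrightarrow> b \<le> b' \<Longrightarrow> b' \<le> (1::real) \<Longrightarrow>
  T_n (T_L a' b) (T_L a b') \<ge> T_n (T_L a b) (T_L a' b')"
  unfolding T_L_def T_n_def by (auto simp: min_def max_def split: if_splits)
lemma P3: "0 \<le> a \<Longrightarrow> a \<le> a' \<Longrightarrow> a' \<le> 1 \<Longrightarrow> 0 \<le> b \<Longrightarrow> b \<le> b' \<Longrightarrow> b' \<le> (1::real) \<Longrightarrow>
  T_n' (T_L' a' b) (T_L' a b') \<le> T_n' (T_L' a b) (T_L' a' b')"
  unfolding T_L'_def T_n'_def by (auto simp: min_def max_def split: if_splits)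
lemma P4: "0 \<le> a \<Longrightarrow> a \<le> a' \<Longrightarrow> a' \<le> 1 \<Longrightarrow> 0 \<le> b \<Longrightarrow> b \<le> b' \<Longrightarrow> b' \<le> (1::real) \<Longrightarrow>
  T_L' (T_n' a' b) (T_n' a b') \<ge> T_L' (T_n' a b) (T_n' a' b')"
  unfolding T_L'_def T_n'_def by (auto simp: min_def max_def split: if_splits)

lemma gTL: "0 \<le> x \<Longrightarrow> x \<le> 1 \<Longrightarrow> 0 \<le> y \<Longrightarrow> y \<le> 1 \<Longrightarrow> 0 \<le> z \<Longrightarrow> z \<le> (1::real) \<Longrightarrow>
  T_L (T_L x y) z = T_L x (T_L y z)" unfolding T_L_def by (auto simp: min_def max_def)
lemma gTn: "0 \<le> x \<Longrightarrow> x \<le> 1 \<Longrightarrow> 0 \<le> y \<Longrightarrow> y \<le> 1 \<Longrightarrow> 0 \<le> z \<Longrightarrow> z \<le> (1::real) \<Longrightarrow>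
  T_n (T_n x y) z = T_n x (T_n y z)" unfolding T_n_def by (auto simp: min_def max_def)
lemma gTL': "0 \<le> x \<Longrightarrow> x \<le> 1 \<Longrightarrow> 0 \<le> y \<Longrightarrow> y \<le> 1 \<Longrightarrow> 0 \<le> z \<Longrightarrow> z \<le> (1::real) \<Longrightarrow>
  T_L' (T_L' x y) z = T_L' x (T_L' y z)" unfolding T_L'_def by (auto simp: min_def max_def)
lemma gTn': "0 \<le> x \<Longrightarrow> x \<le> 1 \<Longrightarrow> 0 \<le> y \<Longrightarrow> y \<le> 1 \<Longrightarrow> 0 \<le> z \<Longrightarrow> z \<le> (1::real) \<Longrightarrow>
  T_n' (T_n' x y) z = T_n' x (T_n' y z)" unfolding T_n'_def by (auto simp: min_def max_def)

lemma good_TL: "good T_L 1" unfolding good_def using gTL by (auto simp: T_L_def)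
lemma good_Tn: "good T_n 1" unfolding good_def using gTn by (auto simp: T_n_def min_def)
lemma good_TL': "good T_L' 0" unfolding good_def using gTL' by (auto simp: T_L'_def)
lemma good_Tn': "good T_n' 0" unfolding good_def using gTn' by (auto simp: T_n'_def max_def)

theorem theorem13:
  shows "rearrangement_ineq T_n T_L \<and> dual_rearrangement_ineq T_n T_L
       \<and> rearrangement_ineq T_L' T_n' \<and> dual_rearrangement_ineq T_L' T_n'"
proof (intro conjI)
  show "rearrangement_ineq T_n T_L" unfolding rearrangement_ineq_def
  proof (intro allI impI)
    fix n x y \<sigma> assume h: "1 \<le> n" "sorted01 n x" "sorted01 n y" "\<sigma> permutes {..<n}"
    show "iter T_L (\<lambda>i. T_n (x (n - 1 - i)) (y i)) (n - 1) \<le> iter T_L (\<lambda>i. T_n (x (\<sigma> i)) (y i)) (n - 1) \<and>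
          iter T_L (\<lambda>i. T_n (x (\<sigma> i)) (y i)) (n - 1) \<le> iter T_L (\<lambda>i. T_n (x i) (y i)) (n - 1)"
      apply (rule generic[OF good_TL _ _ _ h, where R="(\<le>)"])
      subgoal by simp
      subgoal by (auto simp: T_n_def min_def max_def)
      subgoal by (rule P1) auto
      done
  qed
  show "dual_rearrangement_ineq T_n T_L" unfolding dual_rearrangement_ineq_def
  proof (intro allI impI)
    fix n x y \<sigma> assume h: "1 \<le> n" "sorted01 n x" "sorted01 n y" "\<sigma> permutes {..<n}"
    show "iter T_n (\<lambda>i. T_L (x (n - 1 - i)) (y i)) (n - 1) \<ge> iter T_n (\<lambda>i. T_L (x (\<sigma> i)) (y i)) (n - 1) \<and>
          iter T_n (\<lambda>i. T_L (x (\<sigma> i)) (y i)) (n - 1) \<ge> iter T_n (\<lambda>i. T_L (x i) (y i)) (n - 1)"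
      apply (rule generic[OF good_Tn _ _ _ h, where R="(\<ge>)"])
      subgoal by simp
      subgoal by (auto simp: T_L_def min_def max_def)
      subgoal by (rule P2) auto
      done
  qed
  show "rearrangement_ineq T_L' T_n'" unfolding rearrangement_ineq_def
  proof (intro allI impI)
    fix n x y \<sigma> assume h: "1 \<le> n" "sorted01 n x" "sorted01 n y" "\<sigma> permutes {..<n}"
    show "iter T_n' (\<lambda>i. T_L' (x (n - 1 - i)) (y i)) (n - 1) \<le> iter T_n' (\<lambda>i. T_L' (x (\<sigma> i)) (y i)) (n - 1) \<and>
          iter T_n' (\<lambda>i. T_L' (x (\<sigma> i)) (y i)) (n - 1) \<le> iter T_n' (\<lambda>i. T_L' (x i) (y i)) (n - 1)"
      apply (rule generic[OF good_Tn' _ _ _ h, where R="(\<le>)"])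
      subgoal by simp
      subgoal by (auto simp: T_L'_def min_def max_def)
      subgoal by (rule P3) auto
      done
  qed
  show "dual_rearrangement_ineq T_L' T_n'" unfolding dual_rearrangement_ineq_def
  proof (intro allI impI)
    fix n x y \<sigma> assume h: "1 \<le> n" "sorted01 n x" "sorted01 n y" "\<sigma> permutes {..<n}"
    show "iter T_L' (\<lambda>i. T_n' (x (n - 1 - i)) (y i)) (n - 1) \<ge> iter T_L' (\<lambda>i. T_n' (x (\<sigma> i)) (y i)) (n - 1) \<and>
          iter T_L' (\<lambda>i. T_n' (x (\<sigma> i)) (y i)) (n - 1) \<ge> iter T_L' (\<lambda>i. T_n' (x i) (y i)) (n - 1)"
      apply (rule generic[OF good_TL' _ _ _ h, where R="(\<ge>)"])
      subgoal by simp
      subgoal by (auto simp: T_n'_def min_def max_def)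
      subgoal by (rule P4) auto
      done
  qed
qed

end
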